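(* For all positive integers $n$ and $k$ with $k\le 2^n$, we have $v_2\big(s(2^n,k)\big)\le v_2\big(s(2^n,1)\big)$.
   Context: The (unsigned) Stirling numbers of the first kind $s(n,k)$ are defined by $x(x+1)\cdots(x+n-1)=\sum_{k=0}^n s(n,k)x^k$; in particular $s(n,1)=(n-1)!$. $v_2$ denotes the $2$-adic valuation. *)

theory Defs
  imports "HOL-Combinatorics.Stirling" "HOL-Computational_Algebra.Primes"
begin

end

theory Submission
  imports Defs "HOL-Computational_Algebra.Polynomial"
begin


definition v2 :: "nat \<Rightarrow> nat" where "v2 n = multiplicity (2::nat) n"

lemma prime_elem_two_nat: "prime_elem (2::nat)" by simp

lemma v2_dvd: "2 ^ v2 n dvd n"
  unfolding v2_def by (rule multiplicity_dvd)

lemma v2_ndvd: "n > 0 \<Longrightarrow> \<not> 2 ^ Suc (v2 n) dvd n"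
  unfolding v2_def using power_dvd_iff_le_multiplicity[of n "2::nat" "Suc (multiplicity 2 n)"] by auto

lemma v2_eqI: "2 ^ e dvd n \<Longrightarrow> \<not> 2 ^ Suc e dvd n \<Longrightarrow> v2 n = e"
  unfolding v2_def by (rule multiplicity_eqI)

lemma v2_ge_iff: "n > 0 \<Longrightarrow> 2 ^ e dvd n \<longleftrightarrow> e \<le> v2 n"
  unfolding v2_def using power_dvd_iff_le_multiplicity[of n "2::nat" e] by auto

lemma v2_odd: "odd n \<Longrightarrow> v2 n = 0"
  by (rule v2_eqI) auto

lemma v2_even_pos: "even n \<Longrightarrow> n > 0 \<Longrightarrow> v2 n \<ge> 1"
  using v2_ge_iff[of n 1] by auto

lemma v2_pow_le: "n > 0 \<Longrightarrow> 2 ^ v2 n \<le> n"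
  using v2_dvd[of n] by (simp add: dvd_imp_le)

lemma v2_lt_self: "n > 0 \<Longrightarrow> v2 n < n"
  using v2_pow_le[of n] less_exp[of "v2 n"] by linarith

lemma v2_lt_pow: "0 < n \<Longrightarrow> n < 2 ^ j \<Longrightarrow> v2 n < j"
proof -
  assume "0 < n" "n < 2 ^ j"
  then have "(2::nat) ^ v2 n < 2 ^ j" using v2_pow_le[of n] by linarith
  then show ?thesis using power_strict_increasing_iff[of "2::nat" "v2 n" j] by simp
qed

lemma v2_le_pow: "0 < n \<Longrightarrow> n \<le> 2 ^ j \<Longrightarrow> v2 n \<le> j"
proof -
  assume "0 < n" "n \<le> 2 ^ j"
  then have "(2::nat) ^ v2 n \<le> 2 ^ j" using v2_pow_le[of n] by linarith
  then show ?thesis by simp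
qed

lemma v2_pow [simp]: "v2 (2 ^ j) = j"
  unfolding v2_def by simp

lemma v2_mult: "x > 0 \<Longrightarrow> y > 0 \<Longrightarrow> v2 (x * y) = v2 x + v2 y"
  unfolding v2_def by (rule prime_elem_multiplicity_mult_distrib) auto

lemma v2_diff:
  assumes "0 < x" "x < y" "v2 x < v2 y"
  shows "v2 (y - x) = v2 x"
proof (rule v2_eqI)
  have "2 ^ v2 x dvd y" using assms v2_ge_iff[of y "v2 x"] by auto
  then show "2 ^ v2 x dvd y - x" using v2_dvd[of x] by (simp add: dvd_diff_nat)
  show "\<not> 2 ^ Suc (v2 x) dvd y - x"
  proof
    assume h: "2 ^ Suc (v2 x) dvd y - x"
    have "2 ^ Suc (v2 x) dvd y" using assms v2_ge_iff[of y "Suc (v2 x)"] by auto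
    then have "2 ^ Suc (v2 x) dvd y - (y - x)" using h by (simp add: dvd_diff_nat)
    then have "2 ^ Suc (v2 x) dvd x" using assms by simp
    then show False using v2_ndvd[of x] assms by simp
  qed
qed

lemma v2_pow_minus: "0 < t \<Longrightarrow> t < 2 ^ j \<Longrightarrow> v2 (2 ^ j - t) = v2 t"
  using v2_diff[of t "2^j"] v2_lt_pow[of t j] by simp

lemma v2_pow_plus:
  assumes "0 < t" "t < 2 ^ j"
  shows "v2 (2 ^ j + t) = v2 t"
proof (rule v2_eqI)
  have lt: "v2 t < j" using v2_lt_pow assms by blast
  have d1: "2 ^ v2 t dvd (2::nat) ^ j" using lt by (simp add: le_imp_power_dvd)
  then show "2 ^ v2 t dvd 2 ^ j + t" using v2_dvd[of t] by simp
  have d2: "2 ^ Suc (v2 t) dvd (2::nat) ^ j" using lt by (metis Suc_leI le_imp_power_dvd)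
  show "\<not> 2 ^ Suc (v2 t) dvd 2 ^ j + t"
  proof
    assume "2 ^ Suc (v2 t) dvd 2 ^ j + t"
    then have "2 ^ Suc (v2 t) dvd t" using d2 by (simp add: dvd_add_right_iff)
    then show False using v2_ndvd assms by blast
  qed
qed

fun F :: "nat \<Rightarrow> nat \<Rightarrow> nat" where
  "F 0 k = 0"
| "F (Suc L) k = (if k \<le> 2 ^ L then 2 ^ L - k + F L k
                  else if k = 2 ^ Suc L then 0
                  else if even (k - 2 ^ L) then L - v2 (k - 2 ^ L)
                  else 2 * L - v2 (k - 2 ^ L + 1))"

definition beta :: "nat \<Rightarrow> nat \<Rightarrow> nat" where
  "beta m d = (if d = 0 then 0 else if even d then m - v2 d else 2 * m)"

lemma F_top: "F m (2 ^ m) = 0"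
  by (cases m) auto

lemma F_low: "k \<le> 2 ^ L \<Longrightarrow> F (Suc L) k = 2 ^ L - k + F L k" by simp

lemma F_upE: "2 ^ L < k \<Longrightarrow> k < 2 ^ Suc L \<Longrightarrow> even (k - 2 ^ L) \<Longrightarrow> F (Suc L) k = L - v2 (k - 2 ^ L)"
  by simp

lemma F_up: "2 ^ L < k \<Longrightarrow> k < 2 ^ Suc L \<Longrightarrow> F (Suc L) k = (if even (k - 2 ^ L) then L - v2 (k - 2 ^ L) else 2 * L - v2 (k - 2 ^ L + 1))"
  by simp

lemma F_upO:
  assumes "2 ^ L < k" "k < 2 ^ Suc L" "odd (k - 2 ^ L)"
  shows "F (Suc L) k = 2 * L - v2 (k - 2 ^ L + 1)"
proof -
  have h1: "\<not> k \<le> 2 ^ L" "k \<noteq> 2 ^ Suc L" using assms by auto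
  have "F (Suc L) k = (if even (k - 2 ^ L) then L - v2 (k - 2 ^ L) else 2 * L - v2 (k - 2 ^ L + 1))"
    by (simp only: F.simps if_not_P[OF h1(1)] if_not_P[OF h1(2)])
  also have "\<dots> = 2 * L - v2 (k - 2 ^ L + 1)" by (rule if_not_P[OF assms(3)])
  finally show ?thesis .
qed

lemma F_zero [simp]: "F 0 k = 0" by simp

declare F.simps [simp del]
declare F_zero [simp]

lemma F_up_le: "2 ^ L < k \<Longrightarrow> k \<le> 2 ^ Suc L \<Longrightarrow> F (Suc L) k \<le> 2 * L"
  using F_up[of L k] F_top[of "Suc L"] by (cases "k = 2 ^ Suc L") auto

lemma ar1: "1 \<le> (v::nat) \<Longrightarrow> v \<le> 2 * m \<Longrightarrow> 2 * m - v + 1 \<le> 2 * m" by arith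
lemma ar2: "1 \<le> (v::nat) \<Longrightarrow> v \<le> m \<Longrightarrow> m \<le> X \<Longrightarrow> m - v + 1 \<le> X + b" by arith
lemma ar3: "Suc L \<le> (P::nat) \<Longrightarrow> (P - 1) + (P - 1 - L) = 2 * P - 1 - Suc L" by arith

lemma G1: "d > 0 \<Longrightarrow> m + 1 \<le> d + beta m d"
proof -
  assume d: "d > 0"
  show ?thesis
  proof (cases "even d")
    case True
    have "v2 d < d" using v2_lt_self d by blast
    then show ?thesis using True d unfolding beta_def by auto
  next
    case False
    then show ?thesis using d unfolding beta_def by auto
  qed
qed

lemma beta_mono: "beta L d \<le> beta (Suc L) d"
  unfolding beta_def by auto

lemma I4: "1 \<le> a \<Longrightarrow> a < 2 ^ m \<Longrightarrow> m \<le> 2 ^ m - a + F m a"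
proof (cases m)
  case 0
  then show "1 \<le> a \<Longrightarrow> a < 2 ^ m \<Longrightarrow> m \<le> 2 ^ m - a + F m a" by simp
next
  case (Suc L)
  assume a: "1 \<le> a" "a < 2 ^ m"
  have pL: "Suc L \<le> 2 ^ L" using less_exp[of L] by (simp only: Suc_le_eq)
  show ?thesis
  proof (cases "a \<le> 2 ^ L")
    case True
    then show ?thesis using Suc pL F_low[of a L] by simp
  next
    case False
    define t where "t = a - 2 ^ L"
    have t: "0 < t" "t < 2 ^ L" using False a Suc by (auto simp: t_def)
    have aa: "a = 2 ^ L + t" using False t_def by simp
    show ?thesis
    proof (cases "even t")
      case True
      have F: "F m a = L - v2 t" using Suc F_upE[of L a] t aa True by simp
      have "v2 t < L" using v2_lt_pow t by blast
      have "v2 (2 ^ L - t) = v2 t" using v2_pow_minus t by blast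
      then have "2 ^ v2 t \<le> 2 ^ L - t" using v2_pow_le[of "2^L - t"] t by simp
      moreover have "v2 t < 2 ^ v2 t" by (rule less_exp)
      moreover have "2 ^ m - a = 2 ^ L - t" using Suc aa by simp
      ultimately show ?thesis using F Suc aa \<open>v2 t < L\<close> by linarith
    next
      case False
      have o: "odd (a - 2 ^ L)" using \<open>odd t\<close> unfolding t_def .
      have F: "F m a = 2 * L - v2 (t + 1)"
        using F_upO[OF _ _ o] Suc t aa by simp
      have "v2 (t + 1) \<le> L" using v2_le_pow[of "t+1" L] t by simp
      moreover have "2 ^ m - a = 2 ^ L - t" using Suc aa by simp
      moreover have "2 ^ L - t \<ge> 1" using t by simp
      ultimately show ?thesis using F Suc by linarith
    qed
  qed
qed

lemma F_upE_le:
  assumes "2 ^ L < k" "k \<le> 2 ^ Suc L" "even (k - 2 ^ L)"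
  shows "F (Suc L) k \<le> L"
proof (cases "k = 2 ^ Suc L")
  case True
  then show ?thesis using F_top[of "Suc L"] by simp
next
  case False
  then show ?thesis using F_upE[of L k] assms by simp
qed

lemma F_up_le2:
  assumes "1 \<le> L" "2 ^ L < k" "k \<le> 2 ^ Suc L"
  shows "F (Suc L) k \<le> 2 * L - 1"
proof (cases "k = 2 ^ Suc L")
  case True
  then show ?thesis using F_top[of "Suc L"] by simp
next
  case False
  have kl: "k < 2 ^ Suc L" using False assms by simp
  define t where "t = k - 2 ^ L"
  have t: "0 < t" "t < 2 ^ L" using assms False by (auto simp: t_def)
  show ?thesis
  proof (cases "even t")
    case True
    have "v2 t \<ge> 1" using v2_even_pos True t by blast
    have e: "even (k - 2 ^ L)" using True unfolding t_def .
    have "F (Suc L) k = L - v2 t" using F_upE[OF assms(2) kl e] unfolding t_def[symmetric] .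
    then show ?thesis using \<open>v2 t \<ge> 1\<close> assms(1) by linarith
  next
    case False
    have o: "odd (k - 2 ^ L)" using False unfolding t_def .
    have "v2 (t + 1) \<ge> 1" using v2_even_pos[of "t+1"] False by simp
    moreover have "F (Suc L) k = 2 * L - v2 (t + 1)" using F_upO[OF assms(2) kl o] unfolding t_def[symmetric] .
    ultimately show ?thesis by linarith
  qed
qed

lemma I1:
  "1 \<le> a \<Longrightarrow> a < k \<Longrightarrow> k \<le> 2 ^ m \<Longrightarrow> F m k + 1 \<le> (k - a) + F m a + beta m (k - a)"
proof (induction m arbitrary: a k)
  case 0
  then show ?case by simp
next
  case (Suc L)
  note a = Suc.prems
  have G: "Suc L + 1 \<le> (k - a) + beta (Suc L) (k - a)" using G1[of "k - a" "Suc L"] a by simp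
  show ?case
  proof (cases "k \<le> 2 ^ L")
    case True
    have IH: "F L k + 1 \<le> (k - a) + F L a + beta L (k - a)" using Suc.IH[of a k] a True by simp
    have "F (Suc L) k = 2 ^ L - k + F L k" using F_low True by blast
    moreover have "F (Suc L) a = 2 ^ L - a + F L a" using F_low True a by simp
    moreover have "beta L (k - a) \<le> beta (Suc L) (k - a)" by (rule beta_mono)
    ultimately show ?thesis using IH True a by linarith
  next
    case False
    note kH = False
    show ?thesis
    proof (cases "F (Suc L) k \<le> L")
      case True
      then show ?thesis using G by linarith
    next
      case False
      have nt: "k \<noteq> 2 ^ Suc L" using False F_top[of "Suc L"] by auto
      have kH': "2 ^ L < k" using kH by simp
      have kle: "k \<le> 2 ^ Suc L" using a by simp
      have o: "odd (k - 2 ^ L)"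
      proof
        assume "even (k - 2 ^ L)"
        then have "F (Suc L) k \<le> L" using F_upE_le[OF kH' kle] by blast
        then show False using False by simp
      qed
      have Fk: "F (Suc L) k \<le> 2 * L" using F_up_le[of L k] kH a by simp
      show ?thesis
      proof (cases "even (k - a)")
        case False
        then have "beta (Suc L) (k - a) = 2 * Suc L" unfolding beta_def using a by auto
        then have "F (Suc L) k + 1 \<le> beta (Suc L) (k - a)" using Fk by simp
        then show ?thesis by (rule trans_le_add2)
      next
        case True
        show ?thesis
        proof (cases "a \<le> 2 ^ L")
          case True
          have "a \<noteq> 2 ^ L"
          proof
            assume h: "a = 2 ^ L"
            from \<open>even (k - a)\<close> have "even (k - 2 ^ L)" unfolding h .
            then show False using o by blast
          qed
          then have "L \<le> 2 ^ L - a + F L a" using I4[of a L] True a by simp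
          moreover have "F (Suc L) a = 2 ^ L - a + F L a" using F_low True by blast
          ultimately show ?thesis using G Fk by linarith
        next
          case False
          define x where "x = k - a"
          define y where "y = a - 2 ^ L"
          have "k - 2 ^ L = x + y" using False a unfolding x_def y_def by simp
          then have "odd (x + y)" using o by simp
          moreover have "even x" using \<open>even (k - a)\<close> unfolding x_def .
          ultimately have "odd y" by simp
          then have oa: "odd (a - 2 ^ L)" unfolding y_def .
          have ta: "0 < a - 2 ^ L" "a - 2 ^ L < 2 ^ L" using False a kH nt by auto
          have "F (Suc L) a = 2 * L - v2 (a - 2 ^ L + 1)" using F_upO[OF _ _ oa] False a kH nt by simp
          moreover have "v2 (a - 2 ^ L + 1) \<le> L" using v2_le_pow[of "a - 2 ^ L + 1" L] ta by simp
          ultimately show ?thesis using G Fk by linarith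
        qed
      qed
    qed
  qed
qed

lemma I2:
  assumes "even t" "0 < t" "t < 2 ^ m" "t \<le> a" "1 \<le> a" "a < 2 ^ m"
  shows "m - v2 t + 1 \<le> (2 ^ m - a) + F m a + beta m (2 ^ m + t - a)"
proof -
  have "v2 t \<ge> 1" using v2_even_pos assms by blast
  moreover have "v2 t \<le> m" using v2_lt_pow[of t m] assms by simp
  moreover have "m \<le> 2 ^ m - a + F m a" using I4 assms by blast
  ultimately show ?thesis by (rule ar2)
qed

lemma I3:
  assumes to: "odd t" and tm: "t < 2 ^ m" and ta: "t \<le> a" and am: "a \<le> 2 ^ m" and am1: "a \<noteq> 2 ^ m - 1"
  shows "2 * m - v2 (t + 1) + 1 \<le> (2 ^ m - a) + F m a + beta m (2 ^ m + t - a)"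
proof -
  have t0: "0 < t" using to by (cases t) auto
  obtain L where m: "m = Suc L" using t0 tm by (cases m) auto
  define H :: nat where "H = 2 ^ L"
  have N: "(2::nat) ^ m = 2 * H" using m H_def by simp
  have vt: "v2 (t + 1) \<ge> 1" using v2_even_pos[of "t+1"] to by simp
  have vt2: "v2 (t + 1) \<le> m" using v2_le_pow[of "t+1" m] tm by simp
  have pL: "Suc L \<le> H" using less_exp[of L] unfolding H_def by (simp only: Suc_le_eq)
  define d where "d = 2 ^ m + t - a"
  have da: "d + a = 2 * H + t" using ta am N unfolding d_def by simp
  have od: "odd (d + a)" using da to by simp
  show ?thesis
  proof (cases "a = 2 ^ m")
    case True
    have "beta m t = 2 * m" unfolding beta_def using to t0 by auto
    moreover have "2 * m - v2 (t + 1) + 1 \<le> 2 * m" using vt by (rule ar1) (use vt2 in simp)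
    ultimately show ?thesis using True F_top[of m] by simp
  next
    case False
    note aN = False
    show ?thesis
    proof (cases "even a")
      case True
      have "odd d" using od True by simp
      then have "beta m d = 2 * m" unfolding beta_def by auto
      moreover have "2 ^ m - a \<ge> 1" using aN am by simp
      moreover have "2 * m - v2 (t + 1) + 1 \<le> 2 * m + 1" by simp
      ultimately show ?thesis unfolding d_def[symmetric] by linarith
    next
      case False
      note ao = False
      have a2: "a + 2 \<le> 2 * H" using aN am am1 N by simp
      have a2': "a + 2 \<noteq> 2 * H"
      proof
        assume "a + 2 = 2 * H"
        then have "even (a + 2)" by simp
        then show False using ao by simp
      qed
      have aN3: "a + 3 \<le> 2 * H" using a2 a2' by simp
      have ed: "even d" using od ao by simp
      have d0: "0 < d" "d \<le> 2 * H" using da aN3 ta by auto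
      have bd: "beta m d = m - v2 d" unfolding beta_def using d0 ed by auto
      show ?thesis
      proof (cases "a \<le> H")
        case True
        have "a \<noteq> H"
        proof
          assume h: "a = H"
          then have "3 \<le> H" using aN3 by simp
          then have "L \<noteq> 0" using H_def by (cases L) auto
          then have "even H" using H_def by simp
          then show False using ao h by simp
        qed
        then have "L \<le> H - a + F L a" using I4[of a L] True ta t0 H_def by simp
        moreover have "F m a = H - a + F L a" using F_low[of a L] True m H_def by simp
        moreover have "2 ^ m - a \<ge> H + 1" using N True \<open>a \<noteq> H\<close> by simp
        ultimately show ?thesis using vt pL m unfolding d_def[symmetric] by linarith
      next
        case False
        define ta where "ta = a - H"
        have taa: "a = H + ta" using False ta_def by simp
        have "3 \<le> H" using False aN3 by simp
        then have "L \<noteq> 0" using H_def by (cases L) auto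
        then have evH: "even H" using H_def by simp
        have ta: "0 < ta" "ta + 3 \<le> H" "odd ta" using False aN3 ao taa evH by auto
        have oa: "odd (a - 2 ^ L)" using ta(3) unfolding ta_def H_def .
        have Fa: "F m a = 2 * L - v2 (ta + 1)"
          using F_upO[OF _ _ oa] False aN3 m taa unfolding H_def by simp
        have w: "v2 (ta + 1) < L" using v2_lt_pow[of "ta+1" L] ta H_def by simp
        have wa: "v2 (a + 1) = v2 (ta + 1)"
          using v2_pow_plus[of "ta+1" L] ta H_def taa by (simp add: add.assoc)
        have Na: "2 ^ m - a = H - ta" using N taa by simp
        show ?thesis
        proof (cases "a = t")
          case True
          have "d = 2 ^ m" using True d_def by simp
          then have "v2 d = m" by simp
          moreover have "v2 (t + 1) = v2 (ta + 1)" using wa True by simp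
          ultimately show ?thesis using Fa Na ta w bd m unfolding d_def[symmetric] by linarith
        next
          case False
          have at: "0 < a - t" "a - t < 2 ^ m" using False \<open>t \<le> a\<close> am t0 by auto
          have "d = 2 ^ m - (a - t)" using d_def \<open>t \<le> a\<close> am by simp
          then have vd: "v2 d = v2 (a - t)" using v2_pow_minus[OF at] by simp
          have vd2: "v2 (a - t) < m" using v2_lt_pow[OF at] .
          show ?thesis
          proof (cases "v2 (ta + 1) \<le> v2 (t + 1)")
            case True
            then show ?thesis using Fa Na ta w bd vd vd2 m unfolding d_def[symmetric] by linarith
          next
            case False
            have "v2 ((a + 1) - (t + 1)) = v2 (t + 1)"
              using v2_diff[of "t+1" "a+1"] False wa \<open>a \<noteq> t\<close> \<open>t \<le> a\<close> by simp
            then have "v2 (a - t) = v2 (t + 1)" by simp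
            then show ?thesis using Fa Na ta w bd vd m False unfolding d_def[symmetric] by linarith
          qed
        qed
      qed
    qed
  qed
qed

lemma three_le_pow: "3 * L + 1 \<le> 2 ^ Suc L"
proof (induction L)
  case 0
  then show ?case by simp
next
  case (Suc L)
  define P :: nat where "P = 2 ^ Suc L"
  have P2: "2 ^ Suc (Suc L) = 2 * P" unfolding P_def by simp
  show ?case
  proof (cases "L = 0")
    case True
    then show ?thesis by simp
  next
    case False
    have "(2::nat) ^ 2 \<le> 2 ^ Suc L" using False by (intro power_increasing) auto
    then have "4 \<le> P" unfolding P_def by simp
    have "3 * Suc L + 1 \<le> 2 * P" using \<open>4 \<le> P\<close> Suc.IH unfolding P_def[symmetric] mult_Suc_right by linarith
    then show ?thesis using P2 by simp
  qed
qed

lemma F_one: "F m 1 = 2 ^ m - 1 - m"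
proof (induction m)
  case 0
  then show ?case by simp
next
  case (Suc L)
  have "Suc L \<le> 2 ^ L" using less_exp[of L] by (simp only: Suc_le_eq)
  then have "(2 ^ L - 1) + (2 ^ L - 1 - L) = 2 * 2 ^ L - 1 - Suc L" by (rule ar3)
  then show ?case using F_low[of 1 L] Suc by simp
qed

lemma F_max: "1 \<le> k \<Longrightarrow> k \<le> 2 ^ m \<Longrightarrow> F m k \<le> F m 1"
proof (induction m arbitrary: k)
  case 0
  then show ?case by simp
next
  case (Suc L)
  show ?case
  proof (cases "k \<le> 2 ^ L")
    case True
    then show ?thesis using Suc.IH[of k] Suc.prems F_low[of k L] F_low[of 1 L] by simp
  next
    case False
    show ?thesis
    proof (cases "L = 0")
      case True
      then have "k = 2" using False Suc.prems by simp
      then show ?thesis using True F_top[of 1] by simp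
    next
      case False
      have "F (Suc L) k \<le> 2 * L - 1" using F_up_le2[of L k] False \<open>\<not> k \<le> 2 ^ L\<close> Suc.prems by simp
      moreover have "F (Suc L) 1 = 2 ^ Suc L - 1 - Suc L" by (rule F_one)
      moreover have "3 * L + 1 \<le> 2 ^ Suc L" by (rule three_le_pow)
      ultimately show ?thesis using False by linarith
    qed
  qed
qed



definition PP :: "int \<Rightarrow> nat \<Rightarrow> int poly" where
  "PP c n = (\<Prod>j<n. [:c * of_nat j, 1:])"

definition BB :: "nat \<Rightarrow> int poly" where
  "BB n = (\<Prod>j<n. [:2 * of_nat j + 1, 1:])"

lemma mult_lin: "(p::int poly) * [:x, 1:] = smult x p + pCons 0 p"
  by (simp add: mult_pCons_right)

lemma coeff_mult_lin: "coeff ((p::int poly) * [:x, 1:]) a = x * coeff p a + (if a = 0 then 0 else coeff p (a - 1))"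
  by (cases a) (simp_all add: mult_lin del: mult_pCons_left mult_pCons_right)

declare mult_pCons_left [simp del] mult_pCons_right [simp del]

lemma coeff_PP: "coeff (PP c n) a = c ^ (n - a) * int (stirling n a)"
proof (induction n arbitrary: a)
  case 0
  then show ?case by (cases a) (simp_all add: PP_def)
next
  case (Suc n)
  have P: "PP c (Suc n) = PP c n * [:c * of_nat n, 1:]" by (simp add: PP_def)
  show ?case
  proof (cases a)
    case 0
    have z: "stirling n 0 = 0 \<or> n = 0" by (cases n) auto
    then show ?thesis using 0 by (auto simp add: P coeff_mult_lin Suc.IH)
  next
    case (Suc b)
    show ?thesis
    proof (cases "b < n")
      case True
      have e: "n - b = Suc (n - Suc b)" using True by simp
      have "coeff (PP c (Suc n)) a = c * of_nat n * (c ^ (n - Suc b) * int (stirling n (Suc b))) + c ^ (n - b) * int (stirling n b)"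
        using Suc by (simp add: P coeff_mult_lin Suc.IH)
      also have "\<dots> = c ^ (n - b) * (of_nat n * int (stirling n (Suc b)) + int (stirling n b))"
        unfolding e by (simp add: algebra_simps)
      also have "\<dots> = c ^ (Suc n - a) * int (stirling (Suc n) a)" using Suc by simp
      finally show ?thesis .
    next
      case False
      have "stirling n (Suc b) = 0" using False by simp
      then show ?thesis using Suc False by (simp add: P coeff_mult_lin Suc.IH)
    qed
  qed
qed

lemma coeff_prod_lin_top: fixes f :: "nat \<Rightarrow> int" shows "coeff (\<Prod>j<n. [:f j, 1:]) n = (1::int)"
proof (induction n)
  case 0
  then show ?case by simp
next
  case (Suc n)
  have "coeff (\<Prod>j<n. [:f j, 1:]) (Suc n) = 0"
    using degree_prod_sum_le[of "{..<n}" "\<lambda>j. [:f j, 1:]"]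
    by (intro coeff_eq_0) simp
  then show ?case using Suc by (simp add: coeff_mult_lin)
qed

lemma coeff_prod_lin_big: fixes f :: "nat \<Rightarrow> int" shows "n < t \<Longrightarrow> coeff (\<Prod>j<n. [:f j, 1:]) t = (0::int)"
proof (induction n arbitrary: t)
  case 0
  then show ?case by simp
next
  case (Suc n)
  have "coeff (\<Prod>j<n. [:f j, 1:]) t = 0" "coeff (\<Prod>j<n. [:f j, 1:]) (t - 1) = 0"
    using Suc.IH Suc.prems by auto
  then show ?case using Suc.prems by (simp add: coeff_mult_lin)
qed

lemma degree_prod_lin: fixes f :: "nat \<Rightarrow> int" shows "degree (\<Prod>j<n. [:f j, 1:]) = n" (is "degree ?P = n")
proof (rule antisym)
  show "degree ?P \<le> n" using coeff_prod_lin_big[where f=f and n=n] by (intro degree_le) auto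
  show "n \<le> degree ?P" using coeff_prod_lin_top[where f=f and n=n] by (intro le_degree) simp
qed

lemma PP_split: "PP 1 (2 * n) = PP 2 n * BB n"
proof (induction n)
  case 0
  then show ?case by (simp add: PP_def BB_def)
next
  case (Suc n)
  have e: "2 * Suc n = Suc (Suc (2 * n))" by simp
  have "PP 1 (2 * Suc n) = PP 1 (2 * n) * [:int (2 * n), 1:] * [:int (2 * n) + 1, 1:]"
    unfolding e by (simp add: PP_def)
  also have "\<dots> = PP 2 n * BB n * [:2 * int n, 1:] * [:2 * int n + 1, 1:]"
    using Suc by simp
  also have "\<dots> = PP 2 (Suc n) * BB (Suc n)" by (simp add: PP_def BB_def mult_ac)
  finally show ?case .
qed

lemma coeff_lin_power: "coeff ([:c, d:] ^ j) t = of_nat (j choose t) * c ^ (j - t) * (d::int) ^ t"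
proof (cases "t \<le> j")
  case True
  then show ?thesis using coeff_linear_poly_power[of t j c d] by (simp add: mult_ac)
next
  case False
  have "degree ([:c, d:] ^ j) \<le> j"
    using degree_power_le[of "[:c, d:]" j] degree_pCons_le[of c "[:d:]"] by (simp add: order_trans)
  then have "coeff ([:c, d:] ^ j) t = 0" using False by (intro coeff_eq_0) simp
  then show ?thesis using False by simp
qed

lemma pcompose_expand: "pcompose p q = (\<Sum>j\<le>degree p. smult (coeff p j) (q ^ j))"
proof -
  have d: "degree (map_poly (\<lambda>x. [:x:]) p) = degree p" by (rule degree_map_poly) simp
  have "pcompose p q = poly (map_poly (\<lambda>x. [:x:]) p) q" by (rule pcompose_altdef)
  also have "\<dots> = (\<Sum>j\<le>degree p. [:coeff p j:] * q ^ j)"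
    unfolding poly_altdef d by (simp add: coeff_map_poly)
  also have "\<dots> = (\<Sum>j\<le>degree p. smult (coeff p j) (q ^ j))" by (simp add: mult_pCons_left)
  finally show ?thesis .
qed

lemma coeff_pcompose_lin:
  "coeff (pcompose p [:c, d:]) t = (\<Sum>j\<le>degree p. coeff p j * (of_nat (j choose t) * c ^ (j - t) * (d::int) ^ t))"
  unfolding pcompose_expand by (simp add: coeff_sum coeff_lin_power)

lemma pcompose_lin1: "pcompose [:a, 1:] q = [:a:] + (q::int poly)"
  by (simp add: pcompose_pCons mult_pCons_right)

lemma BB_shift: "BB n = pcompose (PP 2 n) [:1, 1:]"
  by (simp add: BB_def PP_def pcompose_prod pcompose_lin1)

lemma BB_sym:
  assumes "even n"
  shows "pcompose (BB n) [:- (2 * int n), -1:] = BB n"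
proof -
  have "pcompose (BB n) [:- (2 * int n), -1:] = (\<Prod>j<n. pcompose [:2 * int j + 1, 1:] [:- (2 * int n), -1:])"
    by (simp add: BB_def pcompose_prod)
  also have "\<dots> = (\<Prod>j<n. - [:2 * int (n - Suc j) + 1, 1:])"
  proof (rule prod.cong)
    fix j assume "j \<in> {..<n}"
    then have "int (n - Suc j) = int n - int j - 1" by auto
    then show "pcompose [:2 * int j + 1, 1:] [:- (2 * int n), -1:] = - [:2 * int (n - Suc j) + 1, 1:]"
      by (simp add: pcompose_lin1 algebra_simps)
  qed simp
  also have "\<dots> = (-1) ^ n * (\<Prod>j<n. [:2 * int (n - Suc j) + 1, 1:])"
    by (simp only: prod_uminus card_lessThan)
  also have "(\<Prod>j<n. [:2 * int (n - Suc j) + 1, 1:]) = BB n"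
    unfolding BB_def by (rule prod.nat_diff_reindex)
  finally show ?thesis using assms by simp
qed



definition exv :: "nat \<Rightarrow> int \<Rightarrow> bool" where
  "exv e x \<longleftrightarrow> 2 ^ e dvd x \<and> \<not> 2 ^ Suc e dvd x"

lemma exv_dvd: "exv e x \<Longrightarrow> 2 ^ e dvd x" by (simp add: exv_def)

lemma exv_mult:
  assumes "exv e x" "exv f y"
  shows "exv (e + f) (x * y)"
proof -
  obtain x' where x: "x = 2 ^ e * x'" using assms(1) exv_def by (auto elim: dvdE)
  obtain y' where y: "y = 2 ^ f * y'" using assms(2) exv_def by (auto elim: dvdE)
  have ox: "odd x'"
  proof
    assume "even x'"
    then obtain z where "x' = 2 * z" by (auto elim: evenE)
    then have "x = 2 ^ Suc e * z" using x by simp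
    then show False using assms(1) by (simp add: exv_def)
  qed
  have oy: "odd y'"
  proof
    assume "even y'"
    then obtain z where "y' = 2 * z" by (auto elim: evenE)
    then have "y = 2 ^ Suc f * z" using y by simp
    then show False using assms(2) by (simp add: exv_def)
  qed
  have xy: "x * y = 2 ^ (e + f) * (x' * y')" using x y by (simp add: power_add algebra_simps)
  have "\<not> 2 ^ Suc (e + f) dvd x * y"
  proof
    assume "2 ^ Suc (e + f) dvd x * y"
    then have "2 ^ (e + f) * 2 dvd 2 ^ (e + f) * (x' * y')" using xy by (simp add: mult.commute)
    then have "(2::int) dvd x' * y'" by (subst (asm) dvd_mult_cancel_left) simp
    then show False using ox oy by simp
  qed
  then show ?thesis using xy by (simp add: exv_def)
qed

lemma exv_add:
  assumes "exv e x" "2 ^ Suc e dvd y"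
  shows "exv e (x + y)"
proof -
  have "2 ^ e dvd y" using assms(2) by (rule dvd_trans[rotated]) (simp add: le_imp_power_dvd)
  then have "2 ^ e dvd x + y" using exv_dvd[OF assms(1)] by (simp add: dvd_add)
  moreover have "\<not> 2 ^ Suc e dvd x + y"
  proof
    assume "2 ^ Suc e dvd x + y"
    then have "2 ^ Suc e dvd x" using assms(2) by (simp add: dvd_add_left_iff)
    then show False using assms(1) by (simp add: exv_def)
  qed
  ultimately show ?thesis by (simp add: exv_def)
qed

lemma int_pow2_dvd: "(2::int) ^ e dvd int n \<longleftrightarrow> (2::nat) ^ e dvd n"
proof -
  have "(2::int) ^ e = int (2 ^ e)" by simp
  then show ?thesis by (simp only: int_dvd_int_iff)
qed

lemma exv_nat: "n > 0 \<Longrightarrow> exv (v2 n) (int n)"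
  unfolding exv_def int_pow2_dvd using v2_dvd v2_ndvd by blast

lemma exv_nat_iff: "n > 0 \<Longrightarrow> exv e (int n) \<longleftrightarrow> v2 n = e"
  unfolding exv_def int_pow2_dvd using v2_dvd v2_ndvd v2_eqI by blast

lemma exv_one: "exv 0 1" by (simp add: exv_def)

lemma exv_odd: "odd x \<Longrightarrow> exv 0 x" by (simp add: exv_def)

lemma sum_exv:
  assumes "finite A" "a0 \<in> A" "exv e (f a0)" "\<And>a. a \<in> A \<Longrightarrow> a \<noteq> a0 \<Longrightarrow> 2 ^ Suc e dvd f a"
  shows "exv e (sum f A)"
proof -
  have "sum f A = f a0 + sum f (A - {a0})" using assms(1,2) by (simp add: sum.remove)
  moreover have "2 ^ Suc e dvd sum f (A - {a0})" using assms(4) by (intro dvd_sum) auto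
  ultimately show ?thesis using exv_add[OF assms(3)] by simp
qed

lemma v2_zero_odd: "n > 0 \<Longrightarrow> v2 n = 0 \<Longrightarrow> odd n"
  using v2_ndvd[of n] by auto

lemma binom_odd: "j \<le> 2 ^ m - 1 \<Longrightarrow> odd ((2 ^ m - 1) choose j)"
proof (induction j)
  case 0
  then show ?case by simp
next
  case (Suc j)
  define M :: nat where "M = 2 ^ m"
  have M1: "1 \<le> M" unfolding M_def by simp
  have j: "Suc j < M" using Suc.prems M1 unfolding M_def by linarith
  have IH: "odd ((M - 1) choose j)" using Suc M_def by simp
  have eq: "Suc j * ((M - 1) choose Suc j) = (M - 1 - j) * ((M - 1) choose j)"
    using binomial_absorption[of j "M - 1"] binomial_absorb_comp[of "M - 1" j] by simp
  have pos1: "(M - 1) choose Suc j > 0" using j by simp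
  have pos2: "(M - 1) choose j > 0" using j by simp
  have "v2 (Suc j * ((M - 1) choose Suc j)) = v2 (Suc j) + v2 ((M - 1) choose Suc j)"
    using pos1 by (intro v2_mult) auto
  moreover have "v2 ((M - 1 - j) * ((M - 1) choose j)) = v2 (M - 1 - j) + v2 ((M - 1) choose j)"
    using pos2 j by (intro v2_mult) auto
  moreover have "v2 ((M - 1) choose j) = 0" using IH v2_odd by blast
  moreover have "v2 (M - 1 - j) = v2 (Suc j)"
  proof -
    have "M - 1 - j = 2 ^ m - Suc j" unfolding M_def by simp
    then show ?thesis using v2_pow_minus[of "Suc j" m] j M_def by simp
  qed
  ultimately have "v2 ((M - 1) choose Suc j) = 0" using eq by simp
  then show ?case using v2_zero_odd pos1 M_def by simp
qed

lemma kummer: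
  assumes "0 < t" "t \<le> 2 ^ m"
  shows "v2 (2 ^ m choose t) = m - v2 t"
proof -
  define M :: nat where "M = 2 ^ m"
  have eq: "t * (M choose t) = M * ((M - 1) choose (t - 1))"
    using times_binomial_minus1_eq[of t M] assms by simp
  have o: "odd ((M - 1) choose (t - 1))" using binom_odd[of "t - 1" m] assms M_def by simp
  have p1: "M choose t > 0" using assms M_def by simp
  have p2: "(M - 1) choose (t - 1) > 0" using assms unfolding M_def by simp
  have "v2 (t * (M choose t)) = v2 t + v2 (M choose t)" using assms p1 by (intro v2_mult) auto
  moreover have "v2 (M * ((M - 1) choose (t - 1))) = v2 M + v2 ((M - 1) choose (t - 1))"
    using p2 M_def by (intro v2_mult) auto
  moreover have "v2 ((M - 1) choose (t - 1)) = 0" using o v2_odd by blast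
  ultimately have "v2 t + v2 (M choose t) = m" using eq M_def by simp
  then show ?thesis unfolding M_def by simp
qed



definition ST :: "nat \<Rightarrow> bool" where
  "ST m \<longleftrightarrow> (\<forall>k. 1 \<le> k \<longrightarrow> k \<le> 2 ^ m \<longrightarrow> exv (F m k) (int (stirling (2 ^ m) k)))"

lemma exv_nonzero: "exv e x \<Longrightarrow> x \<noteq> 0" by (auto simp: exv_def)

lemma exv_pow: "exv e ((2::int) ^ e)" by (simp add: exv_def)

lemma pow_dvd_le: "e \<le> f \<Longrightarrow> (2::int) ^ f dvd x \<Longrightarrow> 2 ^ e dvd x"
  by (erule dvd_trans[rotated]) (simp add: le_imp_power_dvd)

lemma pow_dvd_mult: "(2::int) ^ a dvd x \<Longrightarrow> 2 ^ b dvd y \<Longrightarrow> 2 ^ (a + b) dvd x * y"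
  by (simp add: power_add mult_dvd_mono)

lemma s_conv: "int (stirling (2 * n) k) = (\<Sum>a\<le>k. 2 ^ (n - a) * int (stirling n a) * coeff (BB n) (k - a))"
proof -
  have "int (stirling (2 * n) k) = coeff (PP 1 (2 * n)) k" by (simp add: coeff_PP)
  also have "\<dots> = coeff (PP 2 n * BB n) k" by (simp add: PP_split)
  also have "\<dots> = (\<Sum>a\<le>k. coeff (PP 2 n) a * coeff (BB n) (k - a))" by (rule coeff_mult)
  also have "\<dots> = (\<Sum>a\<le>k. 2 ^ (n - a) * int (stirling n a) * coeff (BB n) (k - a))" by (simp add: coeff_PP)
  finally show ?thesis .
qed

lemma degree_PP2: "degree (PP 2 n) = n"
  unfolding PP_def by (rule degree_prod_lin)

lemma degree_BB: "degree (BB n) = n"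
  unfolding BB_def by (rule degree_prod_lin)

lemma BB_top: "coeff (BB n) n = 1"
  unfolding BB_def by (rule coeff_prod_lin_top)

lemma BB_big: "n < t \<Longrightarrow> coeff (BB n) t = 0"
  unfolding BB_def by (rule coeff_prod_lin_big)

lemma BB_0_odd: "odd (coeff (BB n) 0)"
proof -
  have "coeff (BB n) 0 = (\<Prod>j<n. 2 * int j + 1)"
    by (simp add: poly_0_coeff_0[symmetric] BB_def poly_prod)
  moreover have "odd (\<Prod>j<n. 2 * int j + 1)"
    by (induction n) auto
  ultimately show ?thesis by simp
qed

lemma b_shift: "coeff (BB n) t = (\<Sum>j\<le>n. 2 ^ (n - j) * int (stirling n j) * int (j choose t))"
proof -
  have "coeff (BB n) t = coeff (pcompose (PP 2 n) [:1, 1:]) t" by (simp add: BB_shift)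
  also have "\<dots> = (\<Sum>j\<le>n. coeff (PP 2 n) j * (of_nat (j choose t) * 1 ^ (j - t) * 1 ^ t))"
    unfolding coeff_pcompose_lin degree_PP2 ..
  also have "\<dots> = (\<Sum>j\<le>n. 2 ^ (n - j) * int (stirling n j) * int (j choose t))"
    by (simp add: coeff_PP)
  finally show ?thesis .
qed

lemma b_sym:
  assumes "even n"
  shows "coeff (BB n) t = (\<Sum>j\<le>n. coeff (BB n) j * (int (j choose t) * (- (2 * int n)) ^ (j - t) * (-1) ^ t))"
proof -
  have "coeff (BB n) t = coeff (pcompose (BB n) [:- (2 * int n), -1:]) t" using BB_sym[OF assms] by simp
  also have "\<dots> = (\<Sum>j\<le>n. coeff (BB n) j * (int (j choose t) * (- (2 * int n)) ^ (j - t) * (-1) ^ t))"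
    unfolding coeff_pcompose_lin degree_BB ..
  finally show ?thesis .
qed

lemma ST_dvd: "ST m \<Longrightarrow> 1 \<le> a \<Longrightarrow> a \<le> 2 ^ m \<Longrightarrow> 2 ^ F m a dvd int (stirling (2 ^ m) a)"
  unfolding ST_def using exv_dvd by blast

lemma b_even:
  assumes st: "ST m" and t: "even t" "0 < t" "t \<le> 2 ^ m"
  shows "exv (m - v2 t) (coeff (BB (2 ^ m)) t)"
proof (cases "t = 2 ^ m")
  case True
  then show ?thesis using BB_top[of "2 ^ m"] exv_one by simp
next
  case False
  define M :: nat where "M = 2 ^ m"
  have tM: "t < M" using False t M_def by simp
  have vt1: "1 \<le> v2 t" using v2_even_pos t by blast
  have vtm: "v2 t \<le> m" using v2_lt_pow[of t m] tM t M_def by simp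
  let ?f = "\<lambda>j. 2 ^ (M - j) * int (stirling M j) * int (j choose t)"
  have "exv (m - v2 t) (sum ?f {..M})"
  proof (rule sum_exv[of _ M])
    show "finite {..M}" by simp
    show "M \<in> {..M}" by simp
    have "v2 (M choose t) = m - v2 t" using kummer[of t m] t M_def by simp
    moreover have "M choose t > 0" using tM by simp
    ultimately have "exv (m - v2 t) (int (M choose t))" using exv_nat by metis
    then show "exv (m - v2 t) (?f M)" by simp
  next
    fix j assume j: "j \<in> {..M}" "j \<noteq> M"
    show "2 ^ Suc (m - v2 t) dvd ?f j"
    proof (cases "j < t")
      case True
      then show ?thesis by (simp add: binomial_eq_0)
    next
      case False
      have j1: "1 \<le> j" "j < M" using False t j by auto
      have "2 ^ F m j dvd int (stirling M j)" using ST_dvd[OF st, of j] j1 M_def by simp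
      then have "2 ^ ((M - j) + F m j) dvd 2 ^ (M - j) * int (stirling M j)"
        by (intro pow_dvd_mult) auto
      then have d: "2 ^ ((M - j) + F m j) dvd ?f j" by (rule dvd_mult2)
      have "m \<le> M - j + F m j" using I4[of j m] j1 M_def by simp
      then have "Suc (m - v2 t) \<le> M - j + F m j" using vt1 vtm by simp
      then show ?thesis using pow_dvd_le d by blast
    qed
  qed
  then show ?thesis using b_shift[of M t] M_def by simp
qed

lemma b_odd:
  assumes st: "ST m" and m1: "1 \<le> m" and t: "odd t" "t \<le> 2 ^ m"
  shows "2 ^ (2 * m) dvd coeff (BB (2 ^ m)) t"
proof -
  define M :: nat where "M = 2 ^ m"
  have evM: "even M" using m1 M_def by (cases m) auto
  have tM: "t < M" using t evM M_def by (cases "t = M") auto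
  define g where "g j = coeff (BB M) j * (int (j choose t) * (- (2 * int M)) ^ (j - t))" for j
  have "coeff (BB M) t = (\<Sum>j\<le>M. coeff (BB M) j * (int (j choose t) * (- (2 * int M)) ^ (j - t) * (-1) ^ t))"
    by (rule b_sym[OF evM])
  also have "\<dots> = - (\<Sum>j\<le>M. g j)" using t by (simp add: g_def sum_negf)
  finally have eq1: "coeff (BB M) t = - (\<Sum>j\<le>M. g j)" .
  have "(\<Sum>j\<le>M. g j) = g t + (\<Sum>j\<in>{..M} - {t}. g j)" using tM by (simp add: sum.remove)
  moreover have "g t = coeff (BB M) t" by (simp add: g_def)
  ultimately have eq2: "2 * coeff (BB M) t = - (\<Sum>j\<in>{..M} - {t}. g j)" using eq1 by simp
  have "2 ^ Suc (2 * m) dvd (\<Sum>j\<in>{..M} - {t}. g j)"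
  proof (rule dvd_sum)
    fix j assume j: "j \<in> {..M} - {t}"
    show "2 ^ Suc (2 * m) dvd g j"
    proof (cases "j < t")
      case True
      then show ?thesis by (simp add: g_def binomial_eq_0)
    next
      case False
      then have jt: "t < j" using j by auto
      show ?thesis
      proof (cases "j = Suc t")
        case True
        have e1: "even (Suc t)" using t by simp
        have sM: "Suc t \<le> M" using tM by simp
        have ex: "exv (m - v2 (Suc t)) (coeff (BB M) (Suc t))" using b_even[OF st e1] sM M_def by simp
        have vs: "v2 (Suc t) \<le> m" using v2_le_pow[of "Suc t" m] sM M_def by simp
        have d1: "2 ^ v2 (Suc t) dvd int (Suc t)" using v2_dvd[of "Suc t"] int_pow2_dvd by blast
        have "2 ^ ((m - v2 (Suc t)) + v2 (Suc t)) dvd coeff (BB M) (Suc t) * int (Suc t)"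
          using exv_dvd[OF ex] d1 by (rule pow_dvd_mult)
        then have d2: "2 ^ m dvd coeff (BB M) (Suc t) * int (Suc t)" using vs by simp
        have d3: "2 ^ Suc m dvd - (2 * int M)" using M_def by simp
        have eqe: "m + Suc m = Suc (2 * m)" by simp
        have "2 ^ (m + Suc m) dvd (coeff (BB M) (Suc t) * int (Suc t)) * (- (2 * int M))"
          using d2 d3 by (rule pow_dvd_mult)
        then have "2 ^ Suc (2 * m) dvd (coeff (BB M) (Suc t) * int (Suc t)) * (- (2 * int M))"
          by (simp only: eqe)
        moreover have "g j = (coeff (BB M) (Suc t) * int (Suc t)) * (- (2 * int M))"
          using True by (simp add: g_def)
        ultimately show ?thesis by (simp only:)
      next
        case False
        define r where "r = j - t - 2"
        have j2: "j - t = Suc (Suc r)" using False jt by (simp add: r_def)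
        have "(- (2 * int M)) ^ (j - t) = (2 * int M) ^ 2 * (- (2 * int M)) ^ r"
          unfolding j2 by (simp add: power_Suc power2_eq_square)
        moreover have "(2 * int M) ^ 2 = 2 ^ (2 * m + 2)"
        proof -
          have "2 * int M = 2 ^ Suc m" using M_def by simp
          then have "(2 * int M) ^ 2 = (2 ^ Suc m) ^ 2" by simp
          also have "\<dots> = 2 ^ (Suc m * 2)" by (simp only: power_mult)
          also have "Suc m * 2 = 2 * m + 2" by simp
          finally show ?thesis .
        qed
        ultimately have "2 ^ (2 * m + 2) dvd (- (2 * int M)) ^ (j - t)" by simp
        then have "2 ^ Suc (2 * m) dvd (- (2 * int M)) ^ (j - t)" by (rule pow_dvd_le[rotated]) simp
        then show ?thesis by (simp add: g_def)
      qed
    qed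
  qed
  then have "2 ^ Suc (2 * m) dvd 2 * coeff (BB M) t" using eq2 by simp
  then have "2 * 2 ^ (2 * m) dvd 2 * coeff (BB M) t" by simp
  then show ?thesis using M_def by (subst (asm) dvd_mult_cancel_left) simp
qed

lemma b_lower:
  assumes st: "ST m" and t: "t \<le> 2 ^ m"
  shows "2 ^ beta m t dvd coeff (BB (2 ^ m)) t"
proof (cases "t = 0")
  case True
  then show ?thesis by (simp add: beta_def)
next
  case False
  show ?thesis
  proof (cases "even t")
    case True
    then show ?thesis using b_even[OF st True] False t exv_dvd by (simp add: beta_def)
  next
    case False
    show ?thesis
    proof (cases "m = 0")
      case True
      then show ?thesis using False by (simp add: beta_def)
    next
      case False
      then show ?thesis using b_odd[OF st _ \<open>odd t\<close> t] \<open>odd t\<close> by (simp add: beta_def)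
    qed
  qed
qed



lemma ST_0: "ST 0"
  unfolding ST_def
proof (intro allI impI)
  fix k :: nat assume "1 \<le> k" "k \<le> 2 ^ 0"
  then have "k = 1" by simp
  then show "exv (F 0 k) (int (stirling (2 ^ 0) k))" using exv_one by simp
qed

lemma ar4: "k \<le> (M::nat) \<Longrightarrow> a < k \<Longrightarrow> Fk + 1 \<le> (k - a) + Fa + b \<Longrightarrow> Suc (M - k + Fk) \<le> (M - a) + Fa + b"
  by arith

lemma ST_step:
  assumes st: "ST m"
  shows "ST (Suc m)"
  unfolding ST_def
proof (intro allI impI)
  fix k :: nat assume k1: "1 \<le> k" and k2: "k \<le> 2 ^ Suc m"
  define M :: nat where "M = 2 ^ m"
  have M0: "0 < M" by (simp add: M_def)
  have N: "(2::nat) ^ Suc m = 2 * M" by (simp add: M_def)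
  define T where "T a = 2 ^ (M - a) * int (stirling M a) * coeff (BB M) (k - a)" for a
  have conv: "int (stirling (2 ^ Suc m) k) = (\<Sum>a\<le>k. T a)" unfolding N T_def by (rule s_conv)
  have gen: "2 ^ Suc e dvd T a"
    if "a \<le> k" "a \<noteq> a0"
      and cond: "\<And>a. 1 \<le> a \<Longrightarrow> a \<le> M \<Longrightarrow> a \<le> k \<Longrightarrow> k - a \<le> M \<Longrightarrow> a \<noteq> a0 \<Longrightarrow>
                   Suc e \<le> (M - a) + F m a + beta m (k - a)" for a a0 e
  proof (cases "a = 0 \<or> M < a \<or> M < k - a")
    case True
    then show ?thesis
    proof (elim disjE)
      assume "a = 0" then show ?thesis using M0 by (simp add: T_def)
    next
      assume "M < a" then show ?thesis by (simp add: T_def)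
    next
      assume "M < k - a" then show ?thesis by (simp add: T_def BB_big)
    qed
  next
    case False
    then have a: "1 \<le> a" "a \<le> M" "k - a \<le> M" by auto
    have d1: "2 ^ F m a dvd int (stirling M a)" using ST_dvd[OF st, of a] a M_def by simp
    have d2: "2 ^ beta m (k - a) dvd coeff (BB M) (k - a)" using b_lower[OF st, of "k - a"] a M_def by simp
    have "2 ^ ((M - a) + F m a) dvd 2 ^ (M - a) * int (stirling M a)" using d1 by (intro pow_dvd_mult) auto
    then have "2 ^ (((M - a) + F m a) + beta m (k - a)) dvd T a" unfolding T_def using d2 by (rule pow_dvd_mult)
    moreover have "Suc e \<le> (M - a) + F m a + beta m (k - a)" using cond[OF a(1,2) that(1) a(3) that(2)] .
    ultimately show ?thesis using pow_dvd_le by blast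
  qed
  have fin: "finite {..k}" by simp
  show "exv (F (Suc m) k) (int (stirling (2 ^ Suc m) k))"
  proof (cases "k \<le> M")
    case True
    have e: "F (Suc m) k = (M - k) + F m k + 0" using F_low[of k m] True M_def by simp
    have "exv ((M - k) + F m k + 0) (T k)"
    proof -
      have "exv (M - k) (2 ^ (M - k))" by (rule exv_pow)
      moreover have "exv (F m k) (int (stirling M k))" using st k1 True M_def unfolding ST_def by simp
      moreover have "exv 0 (coeff (BB M) 0)" using BB_0_odd exv_odd by blast
      ultimately have "exv ((M - k) + F m k + 0) (2 ^ (M - k) * int (stirling M k) * coeff (BB M) 0)"
        by (intro exv_mult)
      then show ?thesis by (simp add: T_def)
    qed
    then have "exv (F (Suc m) k) (sum T {..k})"
    proof (intro sum_exv[of "{..k}" k])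
      show "exv (M - k + F m k + 0) (T k) \<Longrightarrow> exv (F (Suc m) k) (T k)" using e by simp
    next
      fix a assume a: "a \<in> {..k}" "a \<noteq> k"
      show "2 ^ Suc (F (Suc m) k) dvd T a"
      proof (rule gen[of a k])
        fix a' assume a': "1 \<le> a'" "a' \<le> M" "a' \<le> k" "k - a' \<le> M" "a' \<noteq> k"
        have "F m k + 1 \<le> (k - a') + F m a' + beta m (k - a')" using I1[of a' k m] a' True M_def by simp
        then show "Suc (F (Suc m) k) \<le> (M - a') + F m a' + beta m (k - a')"
          unfolding e using ar4[of k M a'] True a' by simp
      qed (use a in auto)
    qed auto
    then show ?thesis using conv by simp
  next
    case False
    note kM = False
    show ?thesis
    proof (cases "k = 2 * M")
      case True
      have "F (Suc m) k = 0" using True F_top[of "Suc m"] M_def by simp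
      moreover have "exv 0 (sum T {..k})"
      proof (rule sum_exv[of "{..k}" M])
        show "exv 0 (T M)" using True BB_top[of M] exv_one by (simp add: T_def)
      next
        fix a assume a: "a \<in> {..k}" "a \<noteq> M"
        show "2 ^ Suc 0 dvd T a"
        proof (rule gen[of a M])
          fix a' assume a': "1 \<le> a'" "a' \<le> M" "a' \<le> k" "k - a' \<le> M" "a' \<noteq> M"
          then show "Suc 0 \<le> (M - a') + F m a' + beta m (k - a')" using True by simp
        qed (use a in auto)
      qed (use True in auto)
      ultimately show ?thesis using conv by simp
    next
      case False
      define t where "t = k - M"
      have t: "0 < t" "t < M" "k = M + t" using kM False k2 N by (auto simp: t_def)
      have kk: "2 ^ m < k" "k < 2 ^ Suc m" using t M_def by auto
      show ?thesis
      proof (cases "even t")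
        case True
        have Fk: "F (Suc m) k = m - v2 t" using F_upE[of m k] kk True M_def t_def by simp
        have "exv (m - v2 t) (sum T {..k})"
        proof (rule sum_exv[of "{..k}" M])
          have "exv (m - v2 t) (coeff (BB M) t)" using b_even[OF st True t(1)] t M_def by simp
          then show "exv (m - v2 t) (T M)" using t by (simp add: T_def)
        next
          fix a assume a: "a \<in> {..k}" "a \<noteq> M"
          show "2 ^ Suc (m - v2 t) dvd T a"
          proof (rule gen[of a M])
            fix a' assume a': "1 \<le> a'" "a' \<le> M" "a' \<le> k" "k - a' \<le> M" "a' \<noteq> M"
            have "m - v2 t + 1 \<le> (2 ^ m - a') + F m a' + beta m (2 ^ m + t - a')"
              using I2[of t m a'] True t a' M_def by simp
            moreover have "2 ^ m + t - a' = k - a'" using t M_def by simp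
            ultimately show "Suc (m - v2 t) \<le> (M - a') + F m a' + beta m (k - a')" using M_def by simp
          qed (use a in auto)
        qed (use t in auto)
        then show ?thesis using conv Fk by simp
      next
        case False
        have m1: "1 \<le> m" using t False M_def by (cases m) auto
        have M2: "2 \<le> M" using t by simp
        have Fk: "F (Suc m) k = 2 * m - v2 (t + 1)" using F_upO[of m k] kk False M_def t_def by simp
        have e1: "even (t + 1)" using False by simp
        have vt: "v2 (t + 1) \<le> m" using v2_le_pow[of "t + 1" m] t M_def by simp
        have "exv (2 * m - v2 (t + 1)) (sum T {..k})"
        proof (rule sum_exv[of "{..k}" "M - 1"])
          have sM: "stirling M (M - 1) = M choose 2"
            using stirling_Suc_n_n[of "M - 1"] M0 by simp
          have v22: "v2 2 = 1" using v2_pow[of 1] by simp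
          have "v2 (M choose 2) = m - 1" using kummer[of 2 m] M2 M_def v22 by simp
          moreover have "M choose 2 > 0" using M2 by simp
          ultimately have x1: "exv (m - 1) (int (stirling M (M - 1)))" using exv_nat sM by metis
          have x2: "exv (m - v2 (t + 1)) (coeff (BB M) (t + 1))"
            using b_even[OF st e1] t M_def by simp
          have ex0: "exv (1 + (m - 1) + (m - v2 (t + 1))) (2 ^ 1 * int (stirling M (M - 1)) * coeff (BB M) (t + 1))"
            by (intro exv_mult exv_pow x1 x2)
          have eqn: "1 + (m - 1) + (m - v2 (t + 1)) = 2 * m - v2 (t + 1)" using m1 vt by simp
          have ex: "exv (2 * m - v2 (t + 1)) (2 ^ 1 * int (stirling M (M - 1)) * coeff (BB M) (t + 1))"
            using ex0 by (simp only: eqn)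
          have "M - (M - 1) = 1" "k - (M - 1) = t + 1" using t M0 by auto
          then have "T (M - 1) = 2 ^ 1 * int (stirling M (M - 1)) * coeff (BB M) (t + 1)"
            by (simp only: T_def)
          then show "exv (2 * m - v2 (t + 1)) (T (M - 1))" using ex by (simp only:)
        next
          fix a assume a: "a \<in> {..k}" "a \<noteq> M - 1"
          show "2 ^ Suc (2 * m - v2 (t + 1)) dvd T a"
          proof (rule gen[of a "M - 1"])
            fix a' assume a': "1 \<le> a'" "a' \<le> M" "a' \<le> k" "k - a' \<le> M" "a' \<noteq> M - 1"
            have "2 * m - v2 (t + 1) + 1 \<le> (2 ^ m - a') + F m a' + beta m (2 ^ m + t - a')"
              using I3[of t m a'] False t a' M_def by simp
            moreover have "2 ^ m + t - a' = k - a'" using t M_def by simp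
            ultimately show "Suc (2 * m - v2 (t + 1)) \<le> (M - a') + F m a' + beta m (k - a')" using M_def by simp
          qed (use a in auto)
        qed (use t M0 in auto)
        then show ?thesis using conv Fk by simp
      qed
    qed
  qed
qed

lemma ST_all: "ST n"
  by (induction n) (auto intro: ST_0 ST_step)

theorem corollary1p4:
  fixes n k :: nat
  assumes "n \<ge> 1" and "k \<ge> 1" and "k \<le> 2 ^ n"
  shows "multiplicity (2::nat) (stirling (2 ^ n) k) \<le> multiplicity (2::nat) (stirling (2 ^ n) 1)"
proof -
  have st: "ST n" by (rule ST_all)
  have e1: "exv (F n k) (int (stirling (2 ^ n) k))" using st assms unfolding ST_def by simp
  have e2: "exv (F n 1) (int (stirling (2 ^ n) 1))" using st unfolding ST_def by simp
  have p1: "stirling (2 ^ n) k > 0" using exv_nonzero[OF e1] by simp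
  have p2: "stirling (2 ^ n) 1 > 0" using exv_nonzero[OF e2] by simp
  have "v2 (stirling (2 ^ n) k) = F n k" using exv_nat_iff[OF p1] e1 by simp
  moreover have "v2 (stirling (2 ^ n) 1) = F n 1" using exv_nat_iff[OF p2] e2 by simp
  moreover have "F n k \<le> F n 1" using F_max assms by simp
  ultimately show ?thesis unfolding v2_def by simp
qed

end
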